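(* Let $R\subseteq\{0,1\}^V$ be a relation that is not closed under joins (there exist $x,y\in R$ with $x\vee y\notin R$), but such that every pinning $R_p$ with $\mathrm{dom}(p)\ne\emptyset$ is closed under joins. Then there is a configuration $x$ with $R=\{\mathbf 0,x,\overline x\}$ or $R=\{x,\overline x\}$.
   Context: $x\vee y$ is the coordinatewise maximum. A partial configuration $p$ of $V$ is an element of $\{0,1\}^{\mathrm{dom}(p)}$ with $\mathrm{dom}(p)\subseteq V$; the pinning $R_p\subseteq\{0,1\}^{V\setminus\mathrm{dom}(p)}$ is $\{x:(x,p)\in R\}$. $\mathbf 0$ is the all-zero configuration and $\overline x_i=1-x_i$. *)

theory Defs
  imports Main
begin

text \<open>A configuration x in {0,1}^V is encoded by the set of coordinates where x is 1
  (a subset of V). Join = union, all-zero = {}, complement = V - x.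
  A partial configuration p is encoded by its domain D (a subset of V) and the set P
  (a subset of D) of coordinates where p is 1.\<close>

definition join_closed :: "'v set set \<Rightarrow> bool" where
  "join_closed R \<longleftrightarrow> (\<forall>x\<in>R. \<forall>y\<in>R. x \<union> y \<in> R)"

definition pinning :: "'v set \<Rightarrow> 'v set set \<Rightarrow> 'v set \<Rightarrow> 'v set \<Rightarrow> 'v set set" where
  "pinning V R D P = {x. x \<subseteq> V - D \<and> x \<union> P \<in> R}"

end

theory Submission
  imports Defs
begin

theorem mainTheorem9:
  fixes V :: "'v set" and R :: "'v set set"
  assumes "finite V"
    and "R \<subseteq> Pow V"
    and "\<not> join_closed R"
    and "\<And>D P. D \<subseteq> V \<Longrightarrow> D \<noteq> {} \<Longrightarrow> P \<subseteq> D \<Longrightarrow> join_closed (pinning V R D P)"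
  shows "\<exists>x. x \<subseteq> V \<and> (R = {{}, x, V - x} \<or> R = {x, V - x})"
proof -
  have key: "z \<union> w \<in> R" if z: "z \<in> R" and w: "w \<in> R" and v: "v \<in> V" and ag: "(v \<in> z) = (v \<in> w)" for z w v
  proof -
    have jc: "join_closed (pinning V R {v} (z \<inter> {v}))" using assms(4)[of "{v}" "z \<inter> {v}"] v by auto
    have zV: "z \<subseteq> V" "w \<subseteq> V" using z w assms(2) by auto
    have a: "z - {v} \<in> pinning V R {v} (z \<inter> {v})" unfolding pinning_def using z zV
      by (auto simp: insert_absorb Un_Diff_cancel2 elim!: rev_iffD1[OF _ arg_cong[where f="\<lambda>s. s\<in>R"]])
    have b: "w - {v} \<in> pinning V R {v} (z \<inter> {v})" unfolding pinning_def
    proof (intro CollectI conjI)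
      show "w - {v} \<subseteq> V - {v}" using zV by auto
      have "w - {v} \<union> z \<inter> {v} = w" using ag by auto
      then show "w - {v} \<union> z \<inter> {v} \<in> R" using w by simp
    qed
    have "(z - {v}) \<union> (w - {v}) \<in> pinning V R {v} (z \<inter> {v})" using jc a b unfolding join_closed_def by blast
    moreover have "(z - {v}) \<union> (w - {v}) \<union> z \<inter> {v} = z \<union> w" using ag by auto
    ultimately show ?thesis unfolding pinning_def by auto
  qed
  obtain x y where x: "x \<in> R" and y: "y \<in> R" and xy: "x \<union> y \<notin> R"
    using assms(3) unfolding join_closed_def by blast
  have xV: "x \<subseteq> V" and yV: "y \<subseteq> V" using x y assms(2) by auto
  have yc: "y = V - x"
  proof -
    have "\<forall>v\<in>V. (v \<in> x) \<noteq> (v \<in> y)" using key[OF x y] xy by blast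
    then show ?thesis using xV yV by blast
  qed
  have VR: "V \<notin> R" proof - have "x \<union> y = V" using yc xV by auto then show ?thesis using xy by simp qed
  have sub: "R \<subseteq> {{}, x, V - x}"
  proof
    fix z assume z: "z \<in> R"
    show "z \<in> {{}, x, V - x}"
    proof (rule ccontr)
      assume nz: "z \<notin> {{}, x, V - x}"
      have zV: "z \<subseteq> V" using z assms(2) by auto
      obtain v1 where v1: "v1 \<in> V" "(v1 \<in> z) = (v1 \<in> x)" using nz zV xV by blast
      obtain v2 where v2: "v2 \<in> V" "(v2 \<in> z) = (v2 \<in> V - x)" using nz zV xV by blast
      obtain u where u: "u \<in> z" using nz by blast
      have 1: "z \<union> x \<in> R" using key[OF z x v1] .
      have 2: "z \<union> (V - x) \<in> R" using key[OF z _ v2] x y yc by simp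
      have "(z \<union> x) \<union> (z \<union> (V - x)) \<in> R" using key[OF 1 2, of u] u zV by auto
      moreover have "(z \<union> x) \<union> (z \<union> (V - x)) = V" using zV xV by auto
      ultimately show False using VR by simp
    qed
  qed
  show ?thesis
  proof (cases "{} \<in> R")
    case True then show ?thesis using sub x y yc xV by blast
  next
    case False then show ?thesis using sub x y yc xV by blast
  qed
qed

end
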